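(* Let $n\ge2$ and let $F_n$ have free basis $x_1,\dots,x_n$. There exists a nontrivial cyclically reduced word $\alpha_1\in F_n$ such that the endomorphism $\phi\in\mathrm{End}(F_n)$ defined by $\phi(x_1)=\alpha_1^{-1}x_1\alpha_1$ and $\phi(x_i)=x_i$ for $i\ne1$ is not surjective. (For instance $\alpha_1=x_nx_{n-1}\cdots x_2x_1x_n^{-2}x_{n-1}^{-2}\cdots x_2^{-2}x_1^{-2}$ as chosen in the paper.)
   Context: A word is cyclically reduced if it is reduced and its first letter is not the inverse of its last letter. Together with the preceding result that such conjugating endomorphisms induce surjections on all quotients $F_n/F_n^{(k)}$ of the lower central series ($F_n^{(1)}=F_n$, $F_n^{(k+1)}=[F_n^{(k)},F_n]$), this shows surjectivity on all these nilpotent quotients does not imply surjectivity on $F_n$. *)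

theory Defs
  imports Main
begin

text \<open>The free group F_n on generators x_1,...,x_n, modelled as the set of freely
reduced words.  A letter is a pair (i, b): (i, False) is x_i and (i, True) is x_i^-1.\<close>

type_synonym letter = "nat \<times> bool"
type_synonym word = "letter list"

definition inv_letter :: "letter \<Rightarrow> letter" where
  "inv_letter a = (fst a, \<not> snd a)"

definition inv_word :: "word \<Rightarrow> word" where
  "inv_word w = rev (map inv_letter w)"

fun reduced :: "word \<Rightarrow> bool" where
  "reduced [] = True"
| "reduced [a] = True"
| "reduced (a # b # w) = (b \<noteq> inv_letter a \<and> reduced (b # w))"

fun reduce :: "word \<Rightarrow> word" where
  "reduce [] = []"
| "reduce (a # w) = (case reduce w of
      [] \<Rightarrow> [a]
    | b # w' \<Rightarrow> (if b = inv_letter a then w' else a # b # w'))"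

definition cyclically_reduced :: "word \<Rightarrow> bool" where
  "cyclically_reduced w \<longleftrightarrow> reduced w \<and> (w \<noteq> [] \<longrightarrow> hd w \<noteq> inv_letter (last w))"

definition free_group :: "nat \<Rightarrow> word set" where
  "free_group n = {w. reduced w \<and> (\<forall>a\<in>set w. fst a \<in> {1..n})}"

definition fmult :: "word \<Rightarrow> word \<Rightarrow> word" where
  "fmult u v = reduce (u @ v)"

definition subst_hom :: "(nat \<Rightarrow> word) \<Rightarrow> word \<Rightarrow> word" where
  "subst_hom g w = reduce (concat (map (\<lambda>a. if snd a then inv_word (g (fst a)) else g (fst a)) w))"

definition gen :: "nat \<Rightarrow> word" where
  "gen i = [(i, False)]"

end

theory Submission
  imports Defs
begin

definition s01 :: "nat \<Rightarrow> nat" where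
  "s01 x = (if x = 0 then 1 else if x = 1 then 0 else x)"
definition s12 :: "nat \<Rightarrow> nat" where
  "s12 x = (if x = 1 then 2 else if x = 2 then 1 else x)"

definition T :: "nat \<Rightarrow> nat \<Rightarrow> nat" where
  "T i = (if i = 1 then s01 else if i = 2 then s12 else id)"

fun ev :: "word \<Rightarrow> nat \<Rightarrow> nat" where
  "ev [] = id"
| "ev (a # w) = T (fst a) \<circ> ev w"

lemma TT: "T i \<circ> T i = id"
  by (auto simp: T_def s01_def s12_def fun_eq_iff)

lemma ev_append: "ev (u @ v) = ev u \<circ> ev v"
  by (induction u) (auto simp: comp_assoc)

lemma ev_reduce: "ev (reduce w) = ev w"
proof (induction w)
  case Nil then show ?case by simp
next
  case (Cons a w)
  show ?case
  proof (cases "reduce w")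
    case Nil then show ?thesis using Cons by (simp add: fun_eq_iff)
  next
    case (Cons b w')
    show ?thesis
    proof (cases "b = inv_letter a")
      case True
      then have "fst b = fst a" by (simp add: inv_letter_def)
      then have "ev (a # w) = (T (fst a) \<circ> T (fst a)) \<circ> ev w'"
        using Cons \<open>ev (reduce w) = ev w\<close> by (simp add: comp_assoc)
      then show ?thesis using Cons True by (simp add: TT)
    next
      case False
      then show ?thesis using Cons \<open>ev (reduce w) = ev w\<close> by simp
    qed
  qed
qed

lemma ev_map_inv: "ev (map inv_letter w) = ev w"
  by (induction w) (auto simp: inv_letter_def)

lemma ev_rev: "ev (rev w) \<circ> ev w = id"
proof (induction w)
  case Nil then show ?case by simp
next
  case (Cons a w)
  have "ev (rev (a # w)) \<circ> ev (a # w) = ev (rev w) \<circ> (T (fst a) \<circ> T (fst a)) \<circ> ev w"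
    by (simp add: ev_append comp_assoc)
  also have "\<dots> = ev (rev w) \<circ> ev w" by (simp add: TT)
  also have "\<dots> = id" by (rule Cons.IH)
  finally show ?case .
qed

lemma ev_inv_word: "ev (inv_word w) \<circ> ev w = id"
  unfolding inv_word_def using ev_rev[of "map inv_letter w"] ev_map_inv[of w]
  by (simp add: rev_map[symmetric] ev_map_inv)

definition inK :: "(nat \<Rightarrow> nat) \<Rightarrow> bool" where
  "inK f \<longleftrightarrow> f = id \<or> f = s12"

lemma s12s12: "s12 \<circ> s12 = id"
  by (auto simp: s12_def fun_eq_iff)

lemma inK_comp: "inK f \<Longrightarrow> inK g \<Longrightarrow> inK (f \<circ> g)"
  unfolding inK_def using s12s12 by auto

lemma inK_inv: assumes "inK (ev x)" shows "inK (ev (inv_word x))"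
proof -
  have h: "ev x \<circ> ev x = id" using assms s12s12 unfolding inK_def by auto
  have "ev (inv_word x) = ev (inv_word x) \<circ> (ev x \<circ> ev x)" using h by simp
  also have "\<dots> = ev x" using ev_inv_word[of x] by (simp add: comp_assoc[symmetric])
  finally show ?thesis using assms by simp
qed

lemma ev_subst:
  assumes "\<And>i. inK (ev (g i))"
  shows "inK (ev (subst_hom g w))"
  unfolding subst_hom_def ev_reduce
proof (induction w)
  case Nil then show ?case by (simp add: inK_def id_def)
next
  case (Cons a w)
  have "inK (ev (if snd a then inv_word (g (fst a)) else g (fst a)))"
    using assms inK_inv by auto
  from inK_comp[OF this Cons.IH] show ?case
    by (simp only: list.map concat.simps ev_append)
qed

theorem mainTheorem13:
  fixes n :: nat
  assumes "n \<ge> 2"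
  shows "\<exists>\<alpha> \<in> free_group n. \<alpha> \<noteq> [] \<and> cyclically_reduced \<alpha> \<and>
           (let \<phi> = subst_hom (\<lambda>i. if i = 1 then fmult (fmult (inv_word \<alpha>) (gen 1)) \<alpha> else gen i)
            in \<not> (\<phi> ` free_group n = free_group n))"
proof -
  define \<alpha> :: word where "\<alpha> = [(2,False),(1,False)]"
  define g where "g = (\<lambda>i. if i = 1 then fmult (fmult (inv_word \<alpha>) (gen 1)) \<alpha> else gen i)"
  have g1: "ev (g 1) = s12"
    by (auto simp: g_def fmult_def ev_reduce ev_append \<alpha>_def inv_word_def inv_letter_def
        gen_def T_def s01_def s12_def fun_eq_iff)
  have gK: "inK (ev (g i))" for i
  proof (cases "i = 1")
    case True then show ?thesis using g1 by (simp add: inK_def)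
  next
    case False
    then show ?thesis by (auto simp: g_def gen_def T_def inK_def)
  qed
  have "\<not> (subst_hom g ` free_group n = free_group n)"
  proof
    assume h: "subst_hom g ` free_group n = free_group n"
    have "gen 1 \<in> free_group n" using assms by (simp add: free_group_def gen_def)
    then obtain w where "gen 1 = subst_hom g w" using h by force
    then have "inK (ev (gen 1))" using ev_subst[OF gK] by simp
    moreover have "ev (gen 1) = s01" by (simp add: gen_def T_def)
    moreover have "s01 \<noteq> id" "s01 \<noteq> s12"
      by (auto simp: s01_def s12_def fun_eq_iff dest: spec[of _ 0])
    ultimately show False by (simp add: inK_def)
  qed
  moreover have "\<alpha> \<in> free_group n" using assms
    by (auto simp: \<alpha>_def free_group_def inv_letter_def)
  moreover have "cyclically_reduced \<alpha>"
    by (simp add: \<alpha>_def cyclically_reduced_def inv_letter_def)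
  moreover have "\<alpha> \<noteq> []" by (simp add: \<alpha>_def)
  ultimately show ?thesis unfolding Let_def g_def by blast
qed

end
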